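(* Let $\beta^*\in\mathbb{R}^p$ with support $S$ and $s=|S|$. Let $\ell_0(\beta)=\frac{1}{2t_0}\sum_{j=1}^{t_0}(y_{0j}-x_{0j}^\top\beta)^2$, $\ell_j(\beta)=\frac12(y_j-x_j^\top\beta)^2$ for $j\ge1$, positive weights $w_{t,j}$ with $W_t=\sum_{j=1}^t w_{t,j}$, and $$L_t(\beta;\tilde\beta)=\ell_0(\beta)-\nabla\ell_0(\tilde\beta)^\top\beta+\Big\langle \sum_{j=1}^t\frac{w_{t,j}}{W_t}\nabla\ell_j(\tilde\beta),\beta\Big\rangle .$$ Suppose $\ell_0$ satisfies the RSC condition with parameter $\kappa>0$. Let $\hat\beta_{t-1}\in\mathbb{R}^p$, $\lambda_t>0$ with $\lambda_t\ge2\|\nabla L_t(\beta^*;\hat\beta_{t-1})\|_\infty$, and let $\hat\beta_t$ be a minimizer over $\mathbb{R}^p$ of $\beta\mapsto L_t(\beta;\hat\beta_{t-1})+\lambda_t\|\beta\|_1$. Then $$\|\hat\beta_t-\beta^*\|_1\le\frac{16s}{\kappa}\big(\lambda_t+\|\nabla L_t(\beta^*;\hat\beta_{t-1})\|_\infty\big)\le\frac{24s}{\kappa}\lambda_t$$ and $$\|\hat\beta_t-\beta^*\|_2^2\le\frac{\lambda_t+\|\nabla L_t(\beta^*;\hat\beta_{t-1})\|_\infty}{\kappa}\,\|\hat\beta_t-\beta^*\|_1 .$$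
   Context: A function $f:\mathbb{R}^p\to\mathbb{R}$ satisfies the RSC condition with parameter $\kappa>0$ if for every $\Delta\in\mathcal{C}_S=\{\xi\in\mathbb{R}^p:\|\xi_{S^c}\|_1\le3\|\xi_S\|_1\}$ one has $f(\beta^*+\Delta)-f(\beta^* )-\Delta^\top\nabla f(\beta^* )\ge\kappa\|\Delta\|_2^2$; here $\xi_{\mathcal{A}}$ keeps the entries of $\xi$ indexed by $\mathcal{A}$ and zeroes the others. Gradients of $L_t$ are taken with respect to its first argument. The data points are arbitrary elements of $\mathbb{R}^p\times\mathbb{R}$. *)

theory Defs
  imports "HOL-Analysis.Analysis"
begin

definition l1norm :: "real^'p \<Rightarrow> real" where
  "l1norm v = (\<Sum>i\<in>UNIV. \<bar>v $ i\<bar>)"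

definition linfnorm :: "real^'p \<Rightarrow> real" where
  "linfnorm v = Max {\<bar>v $ i\<bar> | i. True}"

definition supp :: "real^'p \<Rightarrow> 'p set" where
  "supp v = {i. v $ i \<noteq> 0}"

definition restr :: "real^'p \<Rightarrow> 'p set \<Rightarrow> real^'p" where
  "restr v A = (\<chi> i. if i \<in> A then v $ i else 0)"

definition cone :: "'p set \<Rightarrow> (real^'p) set" where
  "cone S = {\<xi>. l1norm (restr \<xi> (- S)) \<le> 3 * l1norm (restr \<xi> S)}"

definition grad :: "(real^'p \<Rightarrow> real) \<Rightarrow> real^'p \<Rightarrow> real^'p" where
  "grad f b = (THE g. (f has_derivative (\<lambda>h. g \<bullet> h)) (at b))"

definition RSC :: "(real^'p \<Rightarrow> real) \<Rightarrow> real^'p \<Rightarrow> real \<Rightarrow> bool" where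
  "RSC f bstar \<kappa> \<longleftrightarrow> \<kappa> > 0 \<and>
     (\<forall>\<Delta>\<in>cone (supp bstar).
        f (bstar + \<Delta>) - f bstar - \<Delta> \<bullet> grad f bstar \<ge> \<kappa> * (norm \<Delta>)\<^sup>2)"

definition ell0 :: "nat \<Rightarrow> (nat \<Rightarrow> real^'p) \<Rightarrow> (nat \<Rightarrow> real) \<Rightarrow> real^'p \<Rightarrow> real" where
  "ell0 t0 x0 y0 \<beta> = (1 / (2 * real t0)) * (\<Sum>j=1..t0. (y0 j - x0 j \<bullet> \<beta>)\<^sup>2)"

definition ellj :: "real^'p \<Rightarrow> real \<Rightarrow> real^'p \<Rightarrow> real" where
  "ellj xj yj \<beta> = (1/2) * (yj - xj \<bullet> \<beta>)\<^sup>2"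

definition Lt :: "nat \<Rightarrow> (nat \<Rightarrow> real^'p) \<Rightarrow> (nat \<Rightarrow> real) \<Rightarrow> nat \<Rightarrow> (nat \<Rightarrow> real)
    \<Rightarrow> (nat \<Rightarrow> real^'p) \<Rightarrow> (nat \<Rightarrow> real) \<Rightarrow> real^'p \<Rightarrow> real^'p \<Rightarrow> real" where
  "Lt t0 x0 y0 t w x y \<beta> \<beta>t =
     ell0 t0 x0 y0 \<beta> - grad (ell0 t0 x0 y0) \<beta>t \<bullet> \<beta>
     + (\<Sum>j=1..t. (w j / (\<Sum>k=1..t. w k)) *\<^sub>R grad (ellj (x j) (y j)) \<beta>t) \<bullet> \<beta>"

end

theory Submission
  imports Defs
begin

lemma grad_eq:
  assumes "(f has_derivative (\<lambda>h. g \<bullet> h)) (at b)"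
  shows "grad f b = (g::real^'p)"
  unfolding grad_def
proof (rule the_equality)
  show "(f has_derivative (\<lambda>h. g \<bullet> h)) (at b)" by fact
  fix g' :: "real^'p" assume "(f has_derivative (\<lambda>h. g' \<bullet> h)) (at b)"
  then have "(\<lambda>h. g' \<bullet> h) = (\<lambda>h. g \<bullet> h)" using has_derivative_unique assms by blast
  then have "g' \<bullet> (g' - g) = g \<bullet> (g' - g)" by metis
  then have "(g' - g) \<bullet> (g' - g) = 0" by (simp add: inner_diff_left)
  then show "g' = g" by simp
qed

definition G0 :: "nat \<Rightarrow> (nat \<Rightarrow> real^'p) \<Rightarrow> (nat \<Rightarrow> real) \<Rightarrow> real^'p \<Rightarrow> real^'p" where
  "G0 t0 x0 y0 b = (\<Sum>j=1..t0. ((x0 j \<bullet> b - y0 j) / real t0) *\<^sub>R x0 j)"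

lemma ell0_deriv:
  "(ell0 t0 x0 y0 has_derivative (\<lambda>h. G0 t0 x0 y0 b \<bullet> h)) (at b)"
proof -
  have "(ell0 t0 x0 y0 has_derivative (\<lambda>h. (1 / (2 * real t0)) * (\<Sum>j=1..t0. 2 * (y0 j - x0 j \<bullet> b) * (- (x0 j \<bullet> h))))) (at b)"
    unfolding ell0_def[abs_def]
    apply (rule has_derivative_eq_rhs)
    apply (rule derivative_eq_intros bounded_linear.has_derivative[OF bounded_linear_inner_right] has_derivative_ident refl)+
    apply (auto simp: fun_eq_iff algebra_simps intro!: sum.cong)
    done
  moreover have "(\<lambda>h. (1 / (2 * real t0)) * (\<Sum>j=1..t0. 2 * (y0 j - x0 j \<bullet> b) * (- (x0 j \<bullet> h)))) = (\<lambda>h. G0 t0 x0 y0 b \<bullet> h)"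
  proof
    fix h
    have "(1 / (2 * real t0)) * (\<Sum>j=1..t0. 2 * (y0 j - x0 j \<bullet> b) * (- (x0 j \<bullet> h)))
       = (\<Sum>j=1..t0. (1 / (2 * real t0)) * (2 * (y0 j - x0 j \<bullet> b) * (- (x0 j \<bullet> h))))"
      by (simp add: sum_distrib_left)
    also have "\<dots> = G0 t0 x0 y0 b \<bullet> h"
      unfolding G0_def inner_sum_left
      by (rule sum.cong) (auto simp: field_simps)
    finally show "(1 / (2 * real t0)) * (\<Sum>j=1..t0. 2 * (y0 j - x0 j \<bullet> b) * (- (x0 j \<bullet> h))) = G0 t0 x0 y0 b \<bullet> h" .
  qed
  ultimately show ?thesis by simp
qed

lemma ell0_excess:
  "ell0 t0 x0 y0 (b + d) - ell0 t0 x0 y0 b - d \<bullet> G0 t0 x0 y0 b = (1 / (2 * real t0)) * (\<Sum>j=1..t0. (x0 j \<bullet> d)\<^sup>2)"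
proof -
  have "ell0 t0 x0 y0 (b + d) - ell0 t0 x0 y0 b - d \<bullet> G0 t0 x0 y0 b =
     (\<Sum>j=1..t0. (1 / (2 * real t0)) * (y0 j - x0 j \<bullet> (b + d))\<^sup>2 - (1 / (2 * real t0)) * (y0 j - x0 j \<bullet> b)\<^sup>2
        - ((x0 j \<bullet> b - y0 j) / real t0) * (d \<bullet> x0 j))"
    by (simp add: ell0_def G0_def inner_sum_right sum_distrib_left sum_subtractf)
  also have "\<dots> = (\<Sum>j=1..t0. (1 / (2 * real t0)) * (x0 j \<bullet> d)\<^sup>2)"
    by (rule sum.cong) (auto simp: field_simps power2_eq_square inner_add_right inner_commute)
  finally show ?thesis by (simp add: sum_distrib_left)
qed

lemma l1_restr: "l1norm (restr v A) = (\<Sum>i\<in>UNIV. if i \<in> A then \<bar>v $ i\<bar> else 0)"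
  unfolding l1norm_def restr_def by (auto intro!: sum.cong)

lemma l1_split: "l1norm v = l1norm (restr v A) + l1norm (restr v (- A))"
  unfolding l1_restr unfolding l1norm_def sum.distrib[symmetric] by (auto intro!: sum.cong)

lemma l1_diff:
  assumes "d = bh - bs"
  shows "l1norm bs - l1norm bh \<le> l1norm (restr d (supp bs)) - l1norm (restr d (- supp bs))"
proof -
  have "l1norm bs - l1norm bh = (\<Sum>i\<in>UNIV. \<bar>bs $ i\<bar> - \<bar>bh $ i\<bar>)"
    unfolding l1norm_def by (simp add: sum_subtractf)
  also have "\<dots> \<le> (\<Sum>i\<in>UNIV. (if i \<in> supp bs then \<bar>d $ i\<bar> else 0) - (if i \<in> - supp bs then \<bar>d $ i\<bar> else 0))"
    by (rule sum_mono) (auto simp: assms supp_def)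
  finally show ?thesis unfolding l1_restr by (simp add: sum_subtractf)
qed

lemma linf_ge: "\<bar>g $ i\<bar> \<le> linfnorm g"
proof -
  have "{\<bar>g $ i\<bar> | i. True} = (\<lambda>i. \<bar>g $ i\<bar>) ` UNIV" by auto
  then have "finite {\<bar>g $ i\<bar> | i. True}" by simp
  then show ?thesis unfolding linfnorm_def by (rule Max_ge) auto
qed

lemma inner_le_linf: "\<bar>g \<bullet> d\<bar> \<le> linfnorm g * l1norm d"
proof -
  have "\<bar>g \<bullet> d\<bar> \<le> (\<Sum>i\<in>UNIV. \<bar>g $ i * d $ i\<bar>)"
    unfolding inner_vec_def by (simp add: sum_abs)
  also have "\<dots> \<le> (\<Sum>i\<in>UNIV. linfnorm g * \<bar>d $ i\<bar>)"
    by (rule sum_mono) (simp add: abs_mult mult_right_mono linf_ge)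
  finally show ?thesis unfolding l1norm_def by (simp add: sum_distrib_left)
qed

lemma l1_S_sq: "(l1norm (restr d A))\<^sup>2 \<le> real (card A) * (norm d)\<^sup>2"
proof -
  have "l1norm (restr d A) = (\<Sum>i\<in>A. \<bar>d $ i\<bar>)"
    unfolding l1_restr by (simp add: sum.If_cases)
  then have "(l1norm (restr d A))\<^sup>2 \<le> (\<Sum>i\<in>A. (\<bar>d $ i\<bar>)\<^sup>2) * card A"
    using sum_squared_le_sum_of_squares by metis
  also have "\<dots> \<le> (\<Sum>i\<in>UNIV. (d $ i)\<^sup>2) * card A"
    by (rule mult_right_mono) (auto intro!: sum_mono2)
  also have "(\<Sum>i\<in>UNIV. (d $ i)\<^sup>2) = (norm d)\<^sup>2"
    unfolding power2_norm_eq_inner inner_vec_def by (simp add: power2_eq_square)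
  finally show ?thesis by (simp add: mult.commute)
qed

theorem lemma2:
  fixes bstar bprev bhat :: "real^'p"
    and x0 x :: "nat \<Rightarrow> real^'p" and y0 y w :: "nat \<Rightarrow> real"
    and t0 t :: nat and \<kappa> lam :: real
  assumes t0_pos: "t0 \<ge> 1" and t_pos: "t \<ge> 1"
    and w_pos: "\<And>j. j \<in> {1..t} \<Longrightarrow> w j > 0"
    and rsc: "RSC (ell0 t0 x0 y0) bstar \<kappa>"
    and lam_pos: "lam > 0"
    and lam_ge: "lam \<ge> 2 * linfnorm (grad (\<lambda>b. Lt t0 x0 y0 t w x y b bprev) bstar)"
    and minim: "\<And>b. Lt t0 x0 y0 t w x y bhat bprev + lam * l1norm bhat
                     \<le> Lt t0 x0 y0 t w x y b bprev + lam * l1norm b"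
  shows "l1norm (bhat - bstar) \<le> 16 * real (card (supp bstar)) / \<kappa>
            * (lam + linfnorm (grad (\<lambda>b. Lt t0 x0 y0 t w x y b bprev) bstar))
       \<and> 16 * real (card (supp bstar)) / \<kappa>
            * (lam + linfnorm (grad (\<lambda>b. Lt t0 x0 y0 t w x y b bprev) bstar))
          \<le> 24 * real (card (supp bstar)) / \<kappa> * lam
       \<and> (norm (bhat - bstar))\<^sup>2 \<le>
          (lam + linfnorm (grad (\<lambda>b. Lt t0 x0 y0 t w x y b bprev) bstar)) / \<kappa>
            * l1norm (bhat - bstar)"
proof -
  define L where "L = (\<lambda>b. Lt t0 x0 y0 t w x y b bprev)"
  define c where "c = (\<Sum>j=1..t. (w j / (\<Sum>k=1..t. w k)) *\<^sub>R grad (ellj (x j) (y j)) bprev) - grad (ell0 t0 x0 y0) bprev"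
  define g where "g = grad L bstar"
  define G where "G = linfnorm g"
  define d where "d = bhat - bstar"
  define S where "S = supp bstar"
  define E where "E = ell0 t0 x0 y0 (bstar + d) - ell0 t0 x0 y0 bstar - d \<bullet> G0 t0 x0 y0 bstar"
  define A where "A = l1norm (restr d S)"
  define B where "B = l1norm (restr d (- S))"
  have Lc: "L b = ell0 t0 x0 y0 b + c \<bullet> b" for b
    unfolding L_def Lt_def c_def by (simp add: inner_diff_left inner_diff_right inner_commute)
  have Lfun: "L = (\<lambda>b. ell0 t0 x0 y0 b + c \<bullet> b)" using Lc by auto
  have "(L has_derivative (\<lambda>h. (G0 t0 x0 y0 bstar + c) \<bullet> h)) (at bstar)"
    unfolding Lfun
    by (rule has_derivative_eq_rhs, rule has_derivative_add[OF ell0_deriv bounded_linear.has_derivative[OF bounded_linear_inner_right has_derivative_ident]])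
       (simp add: fun_eq_iff inner_add_left)
  then have gdef: "g = G0 t0 x0 y0 bstar + c" unfolding g_def by (rule grad_eq)
  have g0: "grad (ell0 t0 x0 y0) bstar = G0 t0 x0 y0 bstar" by (rule grad_eq[OF ell0_deriv])
  have Enn: "E \<ge> 0" unfolding E_def ell0_excess
    by (intro mult_nonneg_nonneg sum_nonneg) auto
  have bh: "bhat = bstar + d" unfolding d_def by simp
  have LE: "L bhat - L bstar = E + g \<bullet> d"
    unfolding Lc E_def gdef bh by (simp add: inner_add_left inner_add_right inner_commute)
  have min1: "L bhat + lam * l1norm bhat \<le> L bstar + lam * l1norm bstar"
    using minim[of bstar] unfolding L_def .
  have F1: "l1norm bstar - l1norm bhat \<le> A - B"
    unfolding A_def B_def S_def by (rule l1_diff) (simp add: d_def)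
  have F2: "\<bar>g \<bullet> d\<bar> \<le> G * l1norm d" unfolding G_def by (rule inner_le_linf)
  have F3: "l1norm d = A + B" unfolding A_def B_def by (rule l1_split)
  have G0': "G \<ge> 0" unfolding G_def using linf_ge[of g] by (meson abs_ge_zero order_trans)
  have Gle: "2 * G \<le> lam" using lam_ge unfolding G_def g_def L_def .
  have A0: "A \<ge> 0" and B0: "B \<ge> 0" unfolding A_def B_def l1norm_def by (auto intro: sum_nonneg)
  have "lam * (l1norm bstar - l1norm bhat) \<le> lam * (A - B)"
    using F1 lam_pos by (simp add: mult_left_mono)
  then have key: "E \<le> lam * (A - B) + G * (A + B)"
    using min1 LE F2 F3 by (simp add: algebra_simps abs_le_iff)
  have "2 * G * A \<le> lam * A" "2 * G * B \<le> lam * B"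
    using Gle A0 B0 by (simp_all add: mult_right_mono)
  then have "lam * B \<le> 3 * lam * A" using key Enn by (simp add: algebra_simps)
  then have cone: "B \<le> 3 * A" using lam_pos by simp
  have "d \<in> cone (supp bstar)" unfolding cone_def using cone A_def B_def S_def by simp
  then have RS: "\<kappa> * (norm d)\<^sup>2 \<le> E" and kp: "\<kappa> > 0"
    using rsc unfolding RSC_def E_def g0 by auto
  have EG: "E \<le> (lam + G) * l1norm d"
    using key F3 A0 B0 G0' lam_pos by (simp add: algebra_simps) (smt (verit) mult_nonneg_nonneg)
  have third: "(norm d)\<^sup>2 \<le> (lam + G) / \<kappa> * l1norm d"
    using RS EG kp by (simp add: field_simps)
  have l1le: "l1norm d \<le> 4 * A" using F3 cone by simp
  have CS: "A\<^sup>2 \<le> real (card S) * (norm d)\<^sup>2" unfolding A_def by (rule l1_S_sq)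
  have "\<kappa> * A\<^sup>2 \<le> real (card S) * (\<kappa> * (norm d)\<^sup>2)"
    using CS kp by (simp add: mult_left_mono algebra_simps)
  also have "\<dots> \<le> real (card S) * ((lam + G) * (4 * A))"
    using RS EG l1le G0' lam_pos
    by (intro mult_left_mono) (auto intro: order_trans mult_left_mono)
  finally have kA: "\<kappa> * A\<^sup>2 \<le> 4 * real (card S) * (lam + G) * A" by (simp add: algebra_simps)
  have Ale: "A \<le> 4 * real (card S) * (lam + G) / \<kappa>"
  proof (cases "A = 0")
    case True then show ?thesis using kp G0' lam_pos by simp
  next
    case False
    then have "A > 0" using A0 by simp
    then have "\<kappa> * A \<le> 4 * real (card S) * (lam + G)"
    proof -
      have "A * (\<kappa> * A) \<le> A * (4 * real (card S) * (lam + G))"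
        using kA by (simp add: power2_eq_square algebra_simps)
      then show ?thesis using \<open>A > 0\<close> by (simp add: mult_left_le_imp_le)
    qed
    then show ?thesis using kp by (simp add: field_simps)
  qed
  have first: "l1norm d \<le> 16 * real (card S) / \<kappa> * (lam + G)"
  proof -
    have "4 * A \<le> 4 * (4 * real (card S) * (lam + G) / \<kappa>)" using Ale by simp
    also have "\<dots> = 16 * real (card S) / \<kappa> * (lam + G)" by simp
    finally show ?thesis using l1le by linarith
  qed
  have second: "16 * real (card S) / \<kappa> * (lam + G) \<le> 24 * real (card S) / \<kappa> * lam"
  proof -
    have "16 * (lam + G) \<le> 24 * lam" using Gle by simp
    moreover have "real (card S) / \<kappa> \<ge> 0" using kp by simp
    ultimately have "real (card S) / \<kappa> * (16 * (lam + G)) \<le> real (card S) / \<kappa> * (24 * lam)"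
      by (rule mult_left_mono)
    then show ?thesis by (simp add: algebra_simps add_divide_distrib)
  qed
  show ?thesis using first second third
    unfolding d_def S_def G_def g_def L_def by simp
qed

end
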